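(* Let $H$ be a connected graph, $G_n$ a graph, $p_n\in(0,1)$, and $$\beta_H(p_n)=\sum_{K=1}^{|V(H)|}p_n^{2|V(H)|-K}\sum_{A\subset V(G_n):|A|=K}t_H(A)^2.$$ Then $$\frac{(1-p_n)\beta_H(p_n)}{2^{|V(H)|}-1}\le\mathrm{Var}[T(H,G_n)]\le\beta_H(p_n).$$
   Context: $G_n$ is a simple labeled graph on $V(G_n)=\{1,\dots,|V(G_n)|\}$ with adjacency $(a_{ij})$; $H=(V(H),E(H))$ with $|Aut(H)|$ automorphisms. $V(G_n)_k$ is the set of $k$-tuples of distinct vertices, $\bar{\mathbf s}$ the set of entries. $M_H(\mathbf s)=\prod_{(i,j)\in E(H)}a_{s_is_j}$, $t_H(A)=\frac1{|Aut(H)|}\sum_{\mathbf s\in V(G_n)_{|V(H)|}:\bar{\mathbf s}\supseteq A}M_H(\mathbf s)$. $\{X_v\}$ i.i.d. Bernoulli$(p_n)$, $X_{\mathbf s}=\prod_uX_{s_u}$, $T(H,G_n)=\frac1{|Aut(H)|}\sum_{\mathbf s}M_H(\mathbf s)X_{\mathbf s}$. *)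

theory Defs
  imports "HOL-Probability.Probability"
begin

definition simple_graph_on :: "nat set \<Rightarrow> (nat \<Rightarrow> nat \<Rightarrow> bool) \<Rightarrow> bool" where
  "simple_graph_on V adj \<longleftrightarrow>
     (\<forall>i\<in>V. \<forall>j\<in>V. adj i j \<longrightarrow> adj j i) \<and> (\<forall>i\<in>V. \<not> adj i i)"

definition connected_graph_on :: "nat set \<Rightarrow> (nat \<Rightarrow> nat \<Rightarrow> bool) \<Rightarrow> bool" where
  "connected_graph_on V adj \<longleftrightarrow> V \<noteq> {} \<and>
     (\<forall>i\<in>V. \<forall>j\<in>V. (\<lambda>x y. x \<in> V \<and> y \<in> V \<and> adj x y)\<^sup>*\<^sup>* i j)"

definition edgesH :: "nat \<Rightarrow> (nat \<Rightarrow> nat \<Rightarrow> bool) \<Rightarrow> (nat \<times> nat) set" where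
  "edgesH h adjH = {(i, j). i < j \<and> j < h \<and> adjH i j}"

definition AutH :: "nat \<Rightarrow> (nat \<Rightarrow> nat \<Rightarrow> bool) \<Rightarrow> (nat \<Rightarrow> nat) set" where
  "AutH h adjH = {\<sigma> \<in> {0..<h} \<rightarrow>\<^sub>E {0..<h}. bij_betw \<sigma> {0..<h} {0..<h} \<and>
       (\<forall>i<h. \<forall>j<h. adjH i j \<longleftrightarrow> adjH (\<sigma> i) (\<sigma> j))}"

definition tuples :: "nat \<Rightarrow> nat \<Rightarrow> (nat \<Rightarrow> nat) set" where
  "tuples N k = {s \<in> {0..<k} \<rightarrow>\<^sub>E {1..N}. inj_on s {0..<k}}"

definition adjval :: "(nat \<Rightarrow> nat \<Rightarrow> bool) \<Rightarrow> nat \<Rightarrow> nat \<Rightarrow> real" where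
  "adjval a i j = (if a i j then 1 else 0)"

definition M_H :: "nat \<Rightarrow> (nat \<Rightarrow> nat \<Rightarrow> bool) \<Rightarrow> (nat \<Rightarrow> nat \<Rightarrow> bool) \<Rightarrow> (nat \<Rightarrow> nat) \<Rightarrow> real" where
  "M_H h adjH a s = (\<Prod>(i, j)\<in>edgesH h adjH. adjval a (s i) (s j))"

definition t_H :: "nat \<Rightarrow> (nat \<Rightarrow> nat \<Rightarrow> bool) \<Rightarrow> nat \<Rightarrow> (nat \<Rightarrow> nat \<Rightarrow> bool) \<Rightarrow> nat set \<Rightarrow> real" where
  "t_H h adjH N a A = (1 / real (card (AutH h adjH))) *
     (\<Sum>s\<in>{s \<in> tuples N h. A \<subseteq> s ` {0..<h}}. M_H h adjH a s)"

definition T_HG :: "nat \<Rightarrow> (nat \<Rightarrow> nat \<Rightarrow> bool) \<Rightarrow> nat \<Rightarrow> (nat \<Rightarrow> nat \<Rightarrow> bool) \<Rightarrow> (nat \<Rightarrow> bool) \<Rightarrow> real" where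
  "T_HG h adjH N a X = (1 / real (card (AutH h adjH))) *
     (\<Sum>s\<in>tuples N h. M_H h adjH a s * (\<Prod>u\<in>{0..<h}. (if X (s u) then 1 else 0)))"

definition bern_field :: "nat \<Rightarrow> real \<Rightarrow> (nat \<Rightarrow> bool) pmf" where
  "bern_field N p = Pi_pmf {1..N} False (\<lambda>_. bernoulli_pmf p)"

definition beta_H :: "nat \<Rightarrow> (nat \<Rightarrow> nat \<Rightarrow> bool) \<Rightarrow> nat \<Rightarrow> (nat \<Rightarrow> nat \<Rightarrow> bool) \<Rightarrow> real \<Rightarrow> real" where
  "beta_H h adjH N a p = (\<Sum>K=1..h. p ^ (2 * h - K) *
      (\<Sum>A\<in>{A. A \<subseteq> {1..N} \<and> card A = K}. (t_H h adjH N a A)\<^sup>2))"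

end

theory Submission
  imports Defs
begin


definition ind :: "bool \<Rightarrow> real" where "ind b = (if b then 1 else 0)"

lemma fin_bern: "finite (set_pmf (bern_field N p))"
  unfolding bern_field_def
  by (rule finite_subset[OF set_Pi_pmf_subset'[of "{1..N}"]]) (auto intro!: finite_PiE_dflt)

lemma integ_bern: "integrable (measure_pmf (bern_field N p)) (f :: _ \<Rightarrow> real)"
  by (rule integrable_measure_pmf_finite[OF fin_bern])

lemma exp_ind_prod:
  assumes "B \<subseteq> {1..N}" "0 \<le> p" "p \<le> 1"
  shows "measure_pmf.expectation (bern_field N p) (\<lambda>X. \<Prod>v\<in>B. ind (X v)) = p ^ card B"
proof -
  have fB: "finite B" using assms(1) finite_subset by blast
  have e: "(\<lambda>X. \<Prod>v\<in>B. ind (X v)) = (\<lambda>X. \<Prod>v\<in>{1..N}. (\<lambda>v b. if v \<in> B then ind b else 1) v (X v))"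
  proof
    fix X
    have "(\<Prod>v\<in>{1..N}. (if v \<in> B then ind (X v) else 1)) = (\<Prod>v\<in>{x\<in>{1..N}. x \<in> B}. ind (X v))"
      by (rule prod.inter_filter[symmetric]) simp
    also have "{x\<in>{1..N}. x \<in> B} = B" using assms(1) by auto
    finally show "(\<Prod>v\<in>B. ind (X v)) = (\<Prod>v\<in>{1..N}. (\<lambda>v b. if v \<in> B then ind b else 1) v (X v))" by simp
  qed
  have "measure_pmf.expectation (bern_field N p) (\<lambda>X. \<Prod>v\<in>B. ind (X v))
      = (\<Prod>v\<in>{1..N}. measure_pmf.expectation (bernoulli_pmf p) (\<lambda>b. if v \<in> B then ind b else 1))"
    unfolding e bern_field_def
    by (rule expectation_prod_Pi_pmf) (auto simp: ind_def intro!: integrable_measure_pmf_finite)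
  also have "\<dots> = (\<Prod>v\<in>{1..N}. if v \<in> B then p else 1)"
    using assms by (intro prod.cong) (auto simp: ind_def)
  also have "\<dots> = (\<Prod>v\<in>{x\<in>{1..N}. x \<in> B}. p)"
    by (rule prod.inter_filter[symmetric]) simp
  also have "{x\<in>{1..N}. x \<in> B} = B" using assms(1) by auto
  finally show ?thesis by simp
qed


lemma prod_ind_union:
  assumes "finite A" "finite B"
  shows "(\<Prod>v\<in>A. ind (X v)) * (\<Prod>v\<in>B. ind (X v)) = (\<Prod>v\<in>A \<union> B. ind (X v))"
proof (cases "\<forall>v\<in>A \<union> B. X v")
  case True
  then show ?thesis by (simp add: ind_def)
next
  case False
  then obtain v where v: "v \<in> A \<union> B" "\<not> X v" by blast
  then have "(\<Prod>v\<in>A \<union> B. ind (X v)) = 0" using assms by (auto simp: ind_def prod_zero_iff intro!: bexI[of _ v])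
  moreover have "(\<Prod>v\<in>A. ind (X v)) * (\<Prod>v\<in>B. ind (X v)) = 0" using v assms
    by (auto simp: ind_def prod_zero_iff intro!: bexI[of _ v])
  ultimately show ?thesis by simp
qed

lemma choose_sum_1: "j \<le> h \<Longrightarrow> (\<Sum>K=1..h. (j choose K)) = 2 ^ j - (1::nat)"
proof -
  assume jh: "j \<le> h"
  have "(\<Sum>K=0..h. (j choose K)) = (\<Sum>K=0..j. (j choose K))"
    using jh by (intro sum.mono_neutral_right) auto
  also have "\<dots> = 2 ^ j" using choose_row_sum[of j] by (simp add: atLeast0AtMost)
  finally have "(\<Sum>K=0..h. (j choose K)) = 2 ^ j" .
  moreover have "(\<Sum>K=0..h. (j choose K)) = 1 + (\<Sum>K=Suc 0..h. (j choose K))"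
    by (subst sum.atLeast_Suc_atMost) auto
  ultimately show ?thesis by simp
qed

lemma pw:
  fixes p :: real
  assumes p: "0 < p" "p < 1" and jh: "j \<le> h"
  defines "g \<equiv> (\<Sum>K=1..h. p ^ (2*h-K) * real (j choose K))"
  shows "(1-p) * g / (2^h-1) \<le> p^(2*h-j) - p^(2*h) \<and> p^(2*h-j) - p^(2*h) \<le> g"
proof (cases "j = 0")
  case True
  then have "g = 0" unfolding g_def by (intro sum.neutral) auto
  then show ?thesis using True by simp
next
  case False
  then have j1: "1 \<le> j" by simp
  have gnn: "\<forall>K\<in>{1..h}. 0 \<le> p ^ (2*h-K) * real (j choose K)" using p by auto
  have "p^(2*h-j) * real (j choose j) \<le> g"
    unfolding g_def using j1 jh gnn by (intro member_le_sum) auto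
  then have a1: "p^(2*h-j) \<le> g" by simp
  have a2: "0 \<le> p^(2*h)" using p by simp
  from a1 a2 have up: "p^(2*h-j) - p^(2*h) \<le> g" by linarith
  have "g \<le> (\<Sum>K=1..h. p ^ (2*h-j) * real (j choose K))"
    unfolding g_def
  proof (intro sum_mono)
    fix K assume "K \<in> {1..h}"
    show "p ^ (2*h-K) * real (j choose K) \<le> p ^ (2*h-j) * real (j choose K)"
    proof (cases "K \<le> j")
      case True
      then have "p ^ (2*h-K) \<le> p ^ (2*h-j)" using p by (intro power_decreasing) auto
      then show ?thesis by (intro mult_right_mono) auto
    next
      case False
      then have z: "real (j choose K) = 0" by simp
      show ?thesis by (simp only: z mult_zero_right order_refl)
    qed
  qed
  also have "\<dots> = p ^ (2*h-j) * real (\<Sum>K=1..h. (j choose K))"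
    by (simp add: sum_distrib_left)
  also have "\<dots> = p ^ (2*h-j) * (2^j - 1)"
  proof -
    have "real (\<Sum>K=1..h. (j choose K)) = real (2^j - 1)" using jh by (simp only: choose_sum_1)
    also have "\<dots> = 2^j - 1" by (simp add: of_nat_diff del: of_nat_power)
    finally have eq: "real (\<Sum>K=1..h. (j choose K)) = 2^j - 1" .
    show ?thesis by (simp only: eq)
  qed
  finally have g1: "g \<le> p ^ (2*h-j) * (2^j - 1)" .
  have "(2::real)^1 \<le> 2^h" using j1 jh by (intro power_increasing) auto
  then have hpos: "(2::real)^h - 1 > 0" by simp
  have jh2: "(2::real)^j - 1 \<le> 2^h - 1" using jh by (simp add: power_increasing)
  have "(1-p) * g / (2^h-1) \<le> (1-p) * (p ^ (2*h-j) * (2^j - 1)) / (2^h-1)"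
    using g1 p hpos by (intro divide_right_mono mult_left_mono) auto
  also have "\<dots> = (1-p) * p ^ (2*h-j) * ((2^j - 1) / (2^h-1))" by simp
  also have "\<dots> \<le> (1-p) * p ^ (2*h-j) * 1"
  proof (rule mult_left_mono)
    show "(2^j - 1) / (2^h-1) \<le> (1::real)" using hpos jh2 by (simp add: pos_divide_le_eq[OF hpos])
    show "0 \<le> (1-p) * p ^ (2*h-j)" using p by simp
  qed
  also have "\<dots> \<le> (1 - p^j) * p ^ (2*h-j)"
  proof -
    have "p^j \<le> p" using power_decreasing[of 1 j p] p j1 by simp
    then have "1 - p \<le> 1 - p^j" by simp
    then show ?thesis using p by (simp add: mult_right_mono)
  qed
  also have "\<dots> = p^(2*h-j) - p^(2*h)"
  proof -
    have "p^(2*h-j) * p^j = p^(2*h)" using jh by (simp flip: power_add)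
    then show ?thesis by (simp add: algebra_simps)
  qed
  finally show ?thesis using up by simp
qed


lemma tuples_props:
  assumes "s \<in> tuples N h"
  shows "s ` {0..<h} \<subseteq> {1..N}" "card (s ` {0..<h}) = h" "inj_on s {0..<h}"
  using assms by (auto simp: tuples_def card_image)

lemma finite_tuples: "finite (tuples N h)"
proof (rule finite_subset[of _ "{0..<h} \<rightarrow>\<^sub>E {1..N}"])
  show "tuples N h \<subseteq> {0..<h} \<rightarrow>\<^sub>E {1..N}" unfolding tuples_def by blast
  show "finite ({0..<h} \<rightarrow>\<^sub>E {1..N})" by (rule finite_PiE) auto
qed

lemma cardsub:
  fixes N K :: nat and x :: real
  assumes "J \<subseteq> {1..N}"
  shows "(\<Sum>A\<in>{A. A \<subseteq> {1..N} \<and> card A = K}. if A \<subseteq> J then x else 0) = x * real (card J choose K)"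
proof -
  have fJ: "finite J" using assms finite_subset by blast
  have fin: "finite {A. A \<subseteq> {1..N} \<and> card A = K}" by (rule finite_subset[of _ "Pow {1..N}"]) auto
  have "(\<Sum>A\<in>{A. A \<subseteq> {1..N} \<and> card A = K}. if A \<subseteq> J then x else 0)
      = (\<Sum>A\<in>{A \<in> {A. A \<subseteq> {1..N} \<and> card A = K}. A \<subseteq> J}. x)"
    by (rule sum.inter_filter[OF fin, symmetric])
  also have "{A \<in> {A. A \<subseteq> {1..N} \<and> card A = K}. A \<subseteq> J} = {A. A \<subseteq> J \<and> card A = K}"
    using assms by auto
  finally show ?thesis using n_subsets[OF fJ, of K] by simp
qed

lemma dsum_mono:
  fixes f g :: "'a \<Rightarrow> 'a \<Rightarrow> real"
  shows "(\<And>s s'. s \<in> T \<Longrightarrow> s' \<in> T \<Longrightarrow> f s s' \<le> g s s') \<Longrightarrow> (\<Sum>s\<in>T. \<Sum>s'\<in>T. f s s') \<le> (\<Sum>s\<in>T. \<Sum>s'\<in>T. g s s')"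
  by (intro sum_mono) auto

lemma main_bounds:
  fixes h N :: nat and adjH a :: "nat \<Rightarrow> nat \<Rightarrow> bool" and p :: real
  assumes p: "0 < p" "p < 1"
  shows "(1 - p) * beta_H h adjH N a p / (2 ^ h - 1)
           \<le> measure_pmf.variance (bern_field N p) (T_HG h adjH N a)
       \<and> measure_pmf.variance (bern_field N p) (T_HG h adjH N a) \<le> beta_H h adjH N a p"
proof -
  define c where "c = 1 / real (card (AutH h adjH))"
  define TT where "TT = tuples N h"
  define M where "M = M_H h adjH a"
  define img where "img = (\<lambda>s::nat\<Rightarrow>nat. s ` {0..<h})"
  define w where "w = (\<lambda>s s'. c^2 * M s * M s')"
  define I where "I = (\<lambda>s s'. card (img s \<inter> img s'))"
  define g where "g = (\<lambda>j. (\<Sum>K=1..h. p ^ (2*h-K) * real (j choose K)))"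
  let ?E = "measure_pmf.expectation (bern_field N p)"
  have fT: "finite TT" unfolding TT_def by (rule finite_tuples)
  have imgN: "\<And>s. s \<in> TT \<Longrightarrow> img s \<subseteq> {1..N}" and cimg: "\<And>s. s \<in> TT \<Longrightarrow> card (img s) = h"
    and injs: "\<And>s. s \<in> TT \<Longrightarrow> inj_on s {0..<h}"
    unfolding TT_def img_def using tuples_props by auto
  have fimg: "\<And>s. finite (img s)" unfolding img_def by simp
  have Mnn: "\<And>s. 0 \<le> M s" unfolding M_def M_H_def by (auto intro!: prod_nonneg simp: adjval_def)
  have wnn: "\<And>s s'. 0 \<le> w s s'" unfolding w_def using Mnn by simp
  have Ile: "\<And>s s'. s \<in> TT \<Longrightarrow> s' \<in> TT \<Longrightarrow> I s s' \<le> h"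
    unfolding I_def using cimg fimg by (metis Int_lower1 card_mono)
  have cU: "\<And>s s'. s \<in> TT \<Longrightarrow> s' \<in> TT \<Longrightarrow> card (img s \<union> img s') = 2*h - I s s'"
  proof -
    fix s s' assume "s \<in> TT" "s' \<in> TT"
    then show "card (img s \<union> img s') = 2*h - I s s'"
      using card_Un_Int[OF fimg fimg, of s s'] cimg unfolding I_def by simp
  qed
  have Teq: "\<And>X. T_HG h adjH N a X = c * (\<Sum>s\<in>TT. M s * (\<Prod>v\<in>img s. ind (X v)))"
  proof -
    fix X
    have "\<And>s. s \<in> TT \<Longrightarrow> (\<Prod>v\<in>img s. ind (X v)) = (\<Prod>u\<in>{0..<h}. (if X (s u) then 1 else 0))"
      unfolding img_def using injs by (subst prod.reindex) (auto simp: ind_def)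
    then show "T_HG h adjH N a X = c * (\<Sum>s\<in>TT. M s * (\<Prod>v\<in>img s. ind (X v)))"
      unfolding T_HG_def c_def TT_def M_def by (auto intro!: sum.cong)
  qed
  have T2: "\<And>X. (T_HG h adjH N a X)^2 = (\<Sum>s\<in>TT. \<Sum>s'\<in>TT. w s s' * (\<Prod>v\<in>img s \<union> img s'. ind (X v)))"
  proof -
    fix X
    show "(T_HG h adjH N a X)^2 = (\<Sum>s\<in>TT. \<Sum>s'\<in>TT. w s s' * (\<Prod>v\<in>img s \<union> img s'. ind (X v)))"
      unfolding Teq power2_eq_square w_def
      by (simp add: sum_product sum_distrib_left prod_ind_union[OF fimg fimg, symmetric] algebra_simps)
  qed
  have ET: "?E (T_HG h adjH N a) = (\<Sum>s\<in>TT. c * M s * p^h)"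
  proof -
    have "?E (T_HG h adjH N a) = ?E (\<lambda>X. \<Sum>s\<in>TT. c * M s * (\<Prod>v\<in>img s. ind (X v)))"
      unfolding Teq by (simp add: sum_distrib_left mult.assoc)
    also have "\<dots> = (\<Sum>s\<in>TT. c * M s * ?E (\<lambda>X. \<Prod>v\<in>img s. ind (X v)))"
      by (subst Bochner_Integration.integral_sum) (auto intro: integ_bern)
    also have "\<dots> = (\<Sum>s\<in>TT. c * M s * p^h)"
      using imgN cimg p by (intro sum.cong) (auto simp: exp_ind_prod)
    finally show ?thesis .
  qed
  have ET2: "?E (\<lambda>X. (T_HG h adjH N a X)^2) = (\<Sum>s\<in>TT. \<Sum>s'\<in>TT. w s s' * p^(2*h - I s s'))"
  proof -
    have "?E (\<lambda>X. (T_HG h adjH N a X)^2) = (\<Sum>s\<in>TT. \<Sum>s'\<in>TT. w s s' * ?E (\<lambda>X. \<Prod>v\<in>img s \<union> img s'. ind (X v)))"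
      unfolding T2
      by (subst Bochner_Integration.integral_sum, simp add: integ_bern,
          subst Bochner_Integration.integral_sum, simp add: integ_bern, simp)
    also have "\<dots> = (\<Sum>s\<in>TT. \<Sum>s'\<in>TT. w s s' * p^(2*h - I s s'))"
      using imgN p by (intro sum.cong refl) (simp add: exp_ind_prod cU)
    finally show ?thesis .
  qed
  have ET_sq: "(?E (T_HG h adjH N a))^2 = (\<Sum>s\<in>TT. \<Sum>s'\<in>TT. w s s' * p^(2*h))"
  proof -
    have pp: "p^(2*h) = p^h * p^h" by (simp add: mult_2 power_add)
    show ?thesis unfolding ET power2_eq_square w_def pp
      by (simp add: sum_product algebra_simps)
  qed
  have Var: "measure_pmf.variance (bern_field N p) (T_HG h adjH N a)
     = (\<Sum>s\<in>TT. \<Sum>s'\<in>TT. w s s' * (p^(2*h - I s s') - p^(2*h)))"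
    by (subst measure_pmf.variance_eq) (auto simp: integ_bern ET2 ET_sq
        sum_subtractf[symmetric] right_diff_distrib)
  have Beta: "beta_H h adjH N a p = (\<Sum>s\<in>TT. \<Sum>s'\<in>TT. w s s' * g (I s s'))"
  proof -
    have tA: "\<And>A. (t_H h adjH N a A)^2 = (\<Sum>s\<in>TT. \<Sum>s'\<in>TT. if A \<subseteq> img s \<inter> img s' then w s s' else 0)"
    proof -
      fix A
      have "t_H h adjH N a A = c * (\<Sum>s\<in>TT. if A \<subseteq> img s then M s else 0)"
        unfolding t_H_def c_def TT_def M_def img_def
        by (subst sum.inter_filter[symmetric]) (auto simp: finite_tuples)
      then show "(t_H h adjH N a A)^2 = (\<Sum>s\<in>TT. \<Sum>s'\<in>TT. if A \<subseteq> img s \<inter> img s' then w s s' else 0)"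
        unfolding power2_eq_square w_def
        by (auto simp add: sum_product sum_distrib_left algebra_simps intro!: sum.cong)
    qed
    have sK: "\<And>K. (\<Sum>A\<in>{A. A \<subseteq> {1..N} \<and> card A = K}. (t_H h adjH N a A)\<^sup>2)
       = (\<Sum>s\<in>TT. \<Sum>s'\<in>TT. w s s' * real (I s s' choose K))"
    proof -
      fix K
      have "(\<Sum>A\<in>{A. A \<subseteq> {1..N} \<and> card A = K}. (t_H h adjH N a A)\<^sup>2)
         = (\<Sum>s\<in>TT. \<Sum>s'\<in>TT. \<Sum>A\<in>{A. A \<subseteq> {1..N} \<and> card A = K}. if A \<subseteq> img s \<inter> img s' then w s s' else 0)"
        unfolding tA by (subst sum.swap) (intro sum.cong refl, rule sum.swap)
      also have "\<dots> = (\<Sum>s\<in>TT. \<Sum>s'\<in>TT. w s s' * real (I s s' choose K))"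
        unfolding I_def using imgN by (intro sum.cong refl cardsub) auto
      finally show "(\<Sum>A\<in>{A. A \<subseteq> {1..N} \<and> card A = K}. (t_H h adjH N a A)\<^sup>2)
       = (\<Sum>s\<in>TT. \<Sum>s'\<in>TT. w s s' * real (I s s' choose K))" .
    qed
    show ?thesis
      unfolding beta_H_def sK g_def
      by (simp add: sum_distrib_left algebra_simps) (subst sum.swap, intro sum.cong refl, rule sum.swap)
  qed
  have pwi: "\<And>s s'. s \<in> TT \<Longrightarrow> s' \<in> TT \<Longrightarrow>
      (1-p) * g (I s s') / (2^h-1) \<le> p^(2*h - I s s') - p^(2*h) \<and> p^(2*h - I s s') - p^(2*h) \<le> g (I s s')"
    unfolding g_def using pw[OF p Ile] by blast
  have L: "(1-p) * beta_H h adjH N a p / (2^h-1) = (\<Sum>s\<in>TT. \<Sum>s'\<in>TT. w s s' * ((1-p) * g (I s s') / (2^h-1)))"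
  proof -
    have "(1-p) * beta_H h adjH N a p / (2^h-1) = (\<Sum>s\<in>TT. \<Sum>s'\<in>TT. (1-p) * (w s s' * g (I s s')) / (2^h-1))"
      unfolding Beta by (simp only: sum_distrib_left sum_divide_distrib)
    also have "\<dots> = (\<Sum>s\<in>TT. \<Sum>s'\<in>TT. w s s' * ((1-p) * g (I s s') / (2^h-1)))"
      by (intro sum.cong refl) simp
    finally show ?thesis .
  qed
  have 1: "(1-p) * beta_H h adjH N a p / (2^h-1) \<le> measure_pmf.variance (bern_field N p) (T_HG h adjH N a)"
    unfolding L Var
  proof (rule dsum_mono)
    fix s s' assume a: "s \<in> TT" "s' \<in> TT"
    show "w s s' * ((1-p) * g (I s s') / (2^h-1)) \<le> w s s' * (p^(2*h - I s s') - p^(2*h))"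
      using mult_left_mono[OF conjunct1[OF pwi[OF a]] wnn[of s s']] .
  qed
  have 2: "measure_pmf.variance (bern_field N p) (T_HG h adjH N a) \<le> beta_H h adjH N a p"
    unfolding Beta Var
  proof (rule dsum_mono)
    fix s s' assume a: "s \<in> TT" "s' \<in> TT"
    show "w s s' * (p^(2*h - I s s') - p^(2*h)) \<le> w s s' * g (I s s')"
      using mult_left_mono[OF conjunct2[OF pwi[OF a]] wnn[of s s']] .
  qed
  show ?thesis by (rule conjI[OF 1 2])
qed

theorem lemma5p1:
  fixes h N :: nat and adjH a :: "nat \<Rightarrow> nat \<Rightarrow> bool" and p :: real
  assumes "simple_graph_on {0..<h} adjH"
    and "connected_graph_on {0..<h} adjH"
    and "simple_graph_on {1..N} a"
    and "0 < p" and "p < 1"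
  shows "(1 - p) * beta_H h adjH N a p / (2 ^ h - 1)
           \<le> measure_pmf.variance (bern_field N p) (T_HG h adjH N a)
       \<and> measure_pmf.variance (bern_field N p) (T_HG h adjH N a) \<le> beta_H h adjH N a p"
  using main_bounds[OF assms(4,5)] .

end
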